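(* If $m$ and $n$ are non-equal positive integers of the same parity, then \[ \sum_{k=1}^\infty\frac{\zeta(2k)}{k(2k+m)(2k+n)} = -\frac{m+n}{(mn)^2}+\frac{\ln(2\pi)}{mn} -\frac{1+(-1)^n}{2(m-n)}\left(i^m(m-1)!\frac{\zeta(m+1)}{(2\pi)^m}-i^n(n-1)!\frac{\zeta(n+1)}{(2\pi)^n}\right) +\frac{1}{m-n}\left((m-1)!\sum_{j=1}^{\lfloor m/2\rfloor}\frac{(-1)^j\zeta(2j+1)}{(m-2j)!(2\pi)^{2j}}-(n-1)!\sum_{j=1}^{\lfloor n/2\rfloor}\frac{(-1)^j\zeta(2j+1)}{(n-2j)!(2\pi)^{2j}}\right). \]
   Context: $\zeta$ is the Riemann zeta function, $i$ is the imaginary unit, and empty sums equal $0$. *)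

theory Defs
  imports "HOL-Analysis.Analysis"
begin

text \<open>Riemann zeta function on real arguments s > 1, given by its Dirichlet series
  (the only range in which it is used here: integer arguments \<ge> 2).\<close>
definition rzeta :: "real \<Rightarrow> real" where
  "rzeta s = (\<Sum>k. 1 / (real (Suc k)) powr s)"

end

theory Submission
  imports Defs "HOL-Real_Asymp.Real_Asymp"
begin

lemma log_cos_series:
  fixes r y :: real
  assumes r: "0 \<le> r" "r < 1"
  shows "(\<lambda>k. r ^ Suc k * cos (2 * pi * real (Suc k) * y) / real (Suc k))
           sums (- ln (1 - 2 * r * cos (2 * pi * y) + r\<^sup>2) / 2)"
proof -
  define w where "w = rcis r (2 * pi * y)"
  have nw: "cmod w < 1" using r by (simp add: w_def)
  have "(\<lambda>n. - ((-(-w))^n) / of_nat n) sums ln (1 + (-w))"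
    by (rule Ln_series') (use nw in simp)
  hence "(\<lambda>n. - (w^n) / of_nat n) sums ln (1 - w)" by simp
  hence "(\<lambda>n. Re (- (w^n) / of_nat n)) sums Re (ln (1 - w))" by (rule sums_Re)
  moreover have "1 - w \<noteq> 0" using nw by auto
  ultimately have A: "(\<lambda>n. - (r ^ n * cos (real n * (2 * pi * y))) / real n) sums ln (cmod (1 - w))"
    by (simp add: Re_Ln w_def DeMoivre2 Re_divide_of_nat)
  have B: "(\<lambda>n. r ^ Suc n * cos (2 * pi * real (Suc n) * y) / real (Suc n)) sums (- ln (cmod (1 - w)))"
    using sums_minus[OF A] by (subst sums_Suc_iff) (simp add: mult_ac)
  have "(cmod (1 - w))\<^sup>2 = (1 - r * cos (2 * pi * y))\<^sup>2 + (r * sin (2 * pi * y))\<^sup>2"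
  proof -
    have re: "Re (1 - w) = 1 - r * cos (2 * pi * y)" by (simp add: w_def)
    have im: "Im (1 - w) = - (r * sin (2 * pi * y))" by (simp add: w_def)
    show ?thesis by (simp only: cmod_power2 re im power2_minus)
  qed
  also have "\<dots> = 1 - 2 * r * cos (2 * pi * y) + r\<^sup>2 * ((sin (2 * pi * y))\<^sup>2 + (cos (2 * pi * y))\<^sup>2)"
    by algebra
  also have "\<dots> = 1 - 2 * r * cos (2 * pi * y) + r\<^sup>2" by simp
  finally have "(cmod (1 - w))\<^sup>2 = 1 - 2 * r * cos (2 * pi * y) + r\<^sup>2" .
  hence "ln ((cmod (1 - w))\<^sup>2) = ln (1 - 2 * r * cos (2 * pi * y) + r\<^sup>2)" by simp
  moreover have "ln ((cmod (1 - w))\<^sup>2) = 2 * ln (cmod (1 - w))"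
    using \<open>1 - w \<noteq> 0\<close> by (simp add: ln_realpow)
  ultimately have "- ln (cmod (1 - w)) = - ln (1 - 2 * r * cos (2 * pi * y) + r\<^sup>2) / 2" by simp
  with B show ?thesis by simp
qed

definition Sr :: "real \<Rightarrow> real \<Rightarrow> real" where
  "Sr r y = (\<Sum>k. r ^ Suc k * sin (2 * pi * real (Suc k) * y) / (real (Suc k))\<^sup>2)"

lemma summable_inv_sq: "summable (\<lambda>k. 1 / (real (Suc k))\<^sup>2)"
  using inverse_squares_sums by (simp add: sums_iff add.commute)

lemma Sr_deriv:
  fixes r y :: real
  assumes r: "0 \<le> r" "r < 1"
  shows "(Sr r has_real_derivative (- pi * ln (1 - 2 * r * cos (2 * pi * y) + r\<^sup>2))) (at y)"
proof -
  define f where "f k y = r ^ Suc k * sin (2 * pi * real (Suc k) * y) / (real (Suc k))\<^sup>2" for k y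
  define f' where "f' k y = 2 * pi * (r ^ Suc k * cos (2 * pi * real (Suc k) * y) / real (Suc k))" for k y
  have d: "(f k has_field_derivative f' k x) (at x within UNIV)" for k x
  proof -
    have "((\<lambda>y. r ^ Suc k / (real (Suc k))\<^sup>2 * sin (2 * pi * real (Suc k) * y)) has_field_derivative
        r ^ Suc k / (real (Suc k))\<^sup>2 * (cos (2 * pi * real (Suc k) * x) * (2 * pi * real (Suc k)))) (at x)"
    proof (rule DERIV_cmult)
      show "((\<lambda>y. sin (2 * pi * real (Suc k) * y)) has_real_derivative cos (2 * pi * real (Suc k) * x) * (2 * pi * real (Suc k))) (at x)"
        by (auto intro!: derivative_eq_intros)
    qed
    moreover have "r ^ Suc k / (real (Suc k))\<^sup>2 * (cos (2 * pi * real (Suc k) * x) * (2 * pi * real (Suc k))) = f' k x"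
      unfolding f'_def by (simp add: power2_eq_square field_simps del: of_nat_Suc)
    moreover have "(\<lambda>y. r ^ Suc k / (real (Suc k))\<^sup>2 * sin (2 * pi * real (Suc k) * y)) = f k"
      by (simp add: f_def fun_eq_iff)
    ultimately show ?thesis by simp
  qed
  have uc: "uniformly_convergent_on UNIV (\<lambda>n x. \<Sum>i<n. f' i x)"
  proof (rule Weierstrass_m_test')
    show "norm (f' n x) \<le> 2 * pi * r ^ Suc n" for n x
    proof -
      have "\<bar>r ^ Suc n * cos (2 * pi * real (Suc n) * x) / real (Suc n)\<bar> \<le> r ^ Suc n"
      proof -
        have "\<bar>cos (2 * pi * real (Suc n) * x)\<bar> / real (Suc n) \<le> 1"
        proof -
          have a: "\<bar>cos (2 * pi * real (Suc n) * x)\<bar> \<le> 1" by (rule abs_cos_le_one)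
          have b: "(1::real) \<le> real (Suc n)" by simp
          from order_trans[OF a b] have "\<bar>cos (2 * pi * real (Suc n) * x)\<bar> \<le> 1 * real (Suc n)" by simp
          thus ?thesis by (simp add: divide_le_eq del: of_nat_Suc)
        qed
        hence "r ^ Suc n * (\<bar>cos (2 * pi * real (Suc n) * x)\<bar> / real (Suc n)) \<le> r ^ Suc n"
          using r by (intro mult_left_le) auto
        thus ?thesis using r by (simp add: abs_mult)
      qed
      hence "2 * pi * \<bar>r ^ Suc n * cos (2 * pi * real (Suc n) * x) / real (Suc n)\<bar> \<le> 2 * pi * r ^ Suc n"
        by (intro mult_left_mono) auto
      thus ?thesis unfolding f'_def real_norm_def abs_mult by simp
    qed
    show "summable (\<lambda>n. 2 * pi * r ^ Suc n)"
      using r by (intro summable_mult summable_geometric_iff[THEN iffD2] summable_Suc_iff[THEN iffD2]) auto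
  qed
  have s0: "summable (\<lambda>n. f n 0)" by (simp add: f_def)
  have "((\<lambda>x. \<Sum>n. f n x) has_field_derivative (\<Sum>n. f' n y)) (at y)"
    by (rule has_field_derivative_series'(2)[OF convex_UNIV d uc _ s0]) auto
  moreover have "(\<Sum>n. f' n y) = - pi * ln (1 - 2 * r * cos (2 * pi * y) + r\<^sup>2)"
  proof -
    have "(\<lambda>n. f' n y) sums (2 * pi * (- ln (1 - 2 * r * cos (2 * pi * y) + r\<^sup>2) / 2))"
      unfolding f'_def by (rule sums_mult[OF log_cos_series[OF r]])
    thus ?thesis by (simp add: sums_iff)
  qed
  moreover have "(\<lambda>x. \<Sum>n. f n x) = Sr r" by (simp add: f_def Sr_def fun_eq_iff)
  ultimately show ?thesis by simp
qed

definition Scl :: "real \<Rightarrow> real" where "Scl y = Sr 1 y"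

lemma Sr_cont: "continuous_on {0..1} (\<lambda>r. Sr r y)"
proof -
  define f where "f k r = r ^ Suc k * sin (2 * pi * real (Suc k) * y) / (real (Suc k))\<^sup>2" for k r
  have "uniform_limit {0..1} (\<lambda>n r. \<Sum>i<n. f i r) (\<lambda>r. suminf (\<lambda>i. f i r)) sequentially"
  proof (rule Weierstrass_m_test)
    show "norm (f n r) \<le> 1 / (real (Suc n))\<^sup>2" if "r \<in> {0..1}" for n r
    proof -
      have "\<bar>r ^ Suc n * sin (2 * pi * real (Suc n) * y)\<bar> \<le> 1"
        using that abs_sin_le_one[of "2 * pi * real (Suc n) * y"]
        by (auto simp: abs_mult intro!: mult_le_one power_le_one)
      thus ?thesis unfolding f_def by (simp add: abs_mult divide_right_mono del: of_nat_Suc)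
    qed
  qed (rule summable_inv_sq)
  hence "continuous_on {0..1} (\<lambda>r. suminf (\<lambda>i. f i r))"
    by (rule uniform_limit_theorem[rotated]) (auto simp: f_def intro!: continuous_intros always_eventually)
  thus ?thesis by (simp add: f_def Sr_def)
qed

lemma Sr_tendsto:
  assumes "\<And>n. rn n \<in> {0..1}" "rn \<longlonglongrightarrow> 1"
  shows "(\<lambda>n. Sr (rn n) y) \<longlonglongrightarrow> Scl y"
proof -
  show ?thesis unfolding Scl_def
    using continuous_on_tendsto_compose[OF Sr_cont[of y] assms(2)] assms(1) by auto
qed

lemma Q_bounds:
  fixes r t :: real
  assumes "1/2 \<le> r" "r \<le> 1"
  shows "2 * (sin (pi * t))\<^sup>2 \<le> 1 - 2 * r * cos (2 * pi * t) + r\<^sup>2"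
    and "1 - 2 * r * cos (2 * pi * t) + r\<^sup>2 \<le> 4"
proof -
  have c: "cos (2 * pi * t) = 1 - 2 * (sin (pi * t))\<^sup>2"
    using cos_double_sin[of "pi * t"] by (simp add: mult.assoc)
  have q: "1 - 2 * r * cos (2 * pi * t) + r\<^sup>2 = (1 - r)\<^sup>2 + 4 * r * (sin (pi * t))\<^sup>2"
    unfolding c by (simp add: power2_eq_square algebra_simps)
  have s1: "(sin (pi * t))\<^sup>2 \<le> 1" using abs_sin_le_one[of "pi * t"] by (simp add: abs_square_le_1)
  have s0: "0 \<le> (sin (pi * t))\<^sup>2" by simp
  show "2 * (sin (pi * t))\<^sup>2 \<le> 1 - 2 * r * cos (2 * pi * t) + r\<^sup>2"
  proof -
    have "2 * (sin (pi * t))\<^sup>2 \<le> (4 * r) * (sin (pi * t))\<^sup>2"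
      using assms s0 by (intro mult_right_mono) auto
    moreover have "0 \<le> (1 - r)\<^sup>2" by simp
    ultimately show ?thesis unfolding q by linarith
  qed
  have "4 * r * (sin (pi * t))\<^sup>2 \<le> 4 * r" using assms s1 by (simp add: mult_left_le)
  thus "1 - 2 * r * cos (2 * pi * t) + r\<^sup>2 \<le> 4"
  proof -
    have "(1 + r)\<^sup>2 \<le> 2\<^sup>2" using assms by (intro power_mono) auto
    moreover have "(1 - r)\<^sup>2 + 4 * r = (1 + r)\<^sup>2" by (simp add: power2_eq_square algebra_simps)
    ultimately show ?thesis unfolding q using \<open>4 * r * (sin (pi * t))\<^sup>2 \<le> 4 * r\<close> by simp
  qed
qed

lemma abs_ln_bound:
  fixes q a :: real
  assumes "0 < a" "a \<le> q" "q \<le> 4"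
  shows "\<bar>ln q\<bar> \<le> ln 4 + \<bar>ln a\<bar>"
proof (cases "1 \<le> q")
  case True
  hence "0 \<le> ln q" "ln q \<le> ln 4" using assms by auto
  thus ?thesis by auto
next
  case False
  hence "ln q < 0" using assms by auto
  moreover have "ln a \<le> ln q" using assms by auto
  moreover have "0 \<le> ln (4::real)" by simp
  ultimately show ?thesis by linarith
qed

lemma Scl_integral:
  assumes "0 < y0" "y0 \<le> y1" "y1 < 1"
  shows "((\<lambda>t. - 2 * pi * ln (2 * sin (pi * t))) has_integral (Scl y1 - Scl y0)) {y0..y1}"
proof -
  define rn :: "nat \<Rightarrow> real" where "rn n = 1 - 1 / (real n + 2)" for n
  have rn1: "1/2 \<le> rn n" "rn n < 1" for n
    unfolding rn_def by (auto simp: field_simps)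
  have rnlim: "rn \<longlonglongrightarrow> 1"
  proof -
    have "(\<lambda>n. 1 / (real n + 2)) \<longlonglongrightarrow> 0"
      using LIMSEQ_ignore_initial_segment[OF lim_inverse_n', of 2]
      by (simp add: inverse_eq_divide add.commute)
    from tendsto_diff[OF tendsto_const[of 1] this] show ?thesis unfolding rn_def[abs_def] by simp
  qed
  define g where "g n t = - pi * ln (1 - 2 * rn n * cos (2 * pi * t) + (rn n)\<^sup>2)" for n t
  define G where "G t = - 2 * pi * ln (2 * sin (pi * t))" for t
  define h where "h t = pi * (ln 4 + \<bar>ln (2 * (sin (pi * t))\<^sup>2)\<bar>)" for t
  have sinpos: "0 < sin (pi * t)" if "t \<in> {y0..y1}" for t
    using that assms by (intro sin_gt_zero) auto
  have gint: "(g n has_integral (Sr (rn n) y1 - Sr (rn n) y0)) {y0..y1}" for n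
  proof (rule fundamental_theorem_of_calculus[OF assms(2)])
    fix x assume "x \<in> {y0..y1}"
    have "(Sr (rn n) has_real_derivative g n x) (at x)"
      unfolding g_def using rn1[of n] by (intro Sr_deriv) auto
    thus "(Sr (rn n) has_vector_derivative g n x) (at x within {y0..y1})"
      by (simp add: has_real_derivative_iff_has_vector_derivative has_vector_derivative_at_within)
  qed
  have hcont: "continuous_on {y0..y1} h"
    unfolding h_def
  proof (intro continuous_intros ballI)
    fix x assume "x \<in> {y0..y1}"
    from sinpos[OF this] show "2 * (sin (pi * x))\<^sup>2 \<noteq> 0" by simp
  qed
  have hint: "h integrable_on {y0..y1}" by (rule integrable_continuous_interval[OF hcont])
  have bound: "norm (g n t) \<le> h t" if "t \<in> {y0..y1}" for n t
  proof -
    have a0: "0 < 2 * (sin (pi * t))\<^sup>2" using sinpos[OF that] by simp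
    have "\<bar>ln (1 - 2 * rn n * cos (2 * pi * t) + (rn n)\<^sup>2)\<bar> \<le> ln 4 + \<bar>ln (2 * (sin (pi * t))\<^sup>2)\<bar>"
    proof (rule abs_ln_bound[OF a0])
      show "2 * (sin (pi * t))\<^sup>2 \<le> 1 - 2 * rn n * cos (2 * pi * t) + (rn n)\<^sup>2"
        using Q_bounds(1)[of "rn n" t] rn1[of n] by simp
      show "1 - 2 * rn n * cos (2 * pi * t) + (rn n)\<^sup>2 \<le> 4"
        using Q_bounds(2)[of "rn n" t] rn1[of n] by simp
    qed
    hence "pi * \<bar>ln (1 - 2 * rn n * cos (2 * pi * t) + (rn n)\<^sup>2)\<bar> \<le> pi * (ln 4 + \<bar>ln (2 * (sin (pi * t))\<^sup>2)\<bar>)"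
      by (rule mult_left_mono) simp
    thus ?thesis unfolding g_def h_def real_norm_def abs_mult abs_minus_cancel by simp
  qed
  have conv: "(\<lambda>n. g n t) \<longlonglongrightarrow> G t" if "t \<in> {y0..y1}" for t
  proof -
    have "(\<lambda>n. 1 - 2 * rn n * cos (2 * pi * t) + (rn n)\<^sup>2) \<longlonglongrightarrow> 1 - 2 * 1 * cos (2 * pi * t) + 1\<^sup>2"
      by (intro tendsto_intros rnlim)
    also have "1 - 2 * 1 * cos (2 * pi * t) + 1\<^sup>2 = (2 * sin (pi * t))\<^sup>2"
      using cos_double_sin[of "pi * t"] by (simp add: mult.assoc power2_eq_square)
    finally have l: "(\<lambda>n. 1 - 2 * rn n * cos (2 * pi * t) + (rn n)\<^sup>2) \<longlonglongrightarrow> (2 * sin (pi * t))\<^sup>2" .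
    have "(\<lambda>n. g n t) \<longlonglongrightarrow> - pi * ln ((2 * sin (pi * t))\<^sup>2)"
      unfolding g_def using sinpos[OF that] by (intro tendsto_intros l) auto
    also have "- pi * ln ((2 * sin (pi * t))\<^sup>2) = G t"
    proof -
      have "ln ((2 * sin (pi * t))\<^sup>2) = 2 * ln (2 * sin (pi * t))"
        using sinpos[OF that] by (subst ln_realpow) auto
      thus ?thesis unfolding G_def by simp
    qed
    finally show ?thesis .
  qed
  have gi: "g n integrable_on {y0..y1}" for n using gint[of n] by blast
  note dc = dominated_convergence[of g "{y0..y1}" h G, OF gi hint bound conv]
  have "(\<lambda>n. integral {y0..y1} (g n)) = (\<lambda>n. Sr (rn n) y1 - Sr (rn n) y0)"
    using gint by (intro ext integral_unique)
  moreover have "(\<lambda>n. Sr (rn n) y1 - Sr (rn n) y0) \<longlonglongrightarrow> Scl y1 - Scl y0"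
  proof -
    have "rn n \<in> {0..1}" for n using rn1[of n] by simp
    thus ?thesis by (intro tendsto_diff Sr_tendsto rnlim)
  qed
  ultimately have "(\<lambda>n. integral {y0..y1} (g n)) \<longlonglongrightarrow> Scl y1 - Scl y0" by simp
  hence eq: "integral {y0..y1} G = Scl y1 - Scl y0"
    using dc(2) by (rule LIMSEQ_unique[rotated])
  have "(G has_integral integral {y0..y1} G) {y0..y1}" using dc(1) by (rule integrable_integral)
  hence "(G has_integral (Scl y1 - Scl y0)) {y0..y1}" by (simp only: eq)
  thus ?thesis by (simp only: G_def[abs_def])
qed

lemma Scl_cont: "continuous_on UNIV Scl"
proof -
  define f where "f k y = sin (2 * pi * real (Suc k) * y) / (real (Suc k))\<^sup>2" for k y
  have "uniform_limit UNIV (\<lambda>n y. \<Sum>i<n. f i y) (\<lambda>y. suminf (\<lambda>i. f i y)) sequentially"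
  proof (rule Weierstrass_m_test)
    show "norm (f n y) \<le> 1 / (real (Suc n))\<^sup>2" for n y
      unfolding f_def using abs_sin_le_one[of "2 * pi * real (Suc n) * y"]
      by (simp add: abs_mult divide_right_mono del: of_nat_Suc)
  qed (rule summable_inv_sq)
  hence "continuous_on UNIV (\<lambda>y. suminf (\<lambda>i. f i y))"
    by (rule uniform_limit_theorem[rotated]) (auto simp: f_def intro!: continuous_intros always_eventually)
  thus ?thesis by (simp add: f_def Scl_def Sr_def)
qed

lemma Scl_0: "Scl 0 = 0" by (simp add: Scl_def Sr_def)

lemma Scl_1: "Scl 1 = 0"
proof -
  have "sin (2 * pi * real (Suc k) * 1) = 0" for k
    using sin_npi[of "2 * Suc k"] by (simp add: mult_ac)
  thus ?thesis by (simp add: Scl_def Sr_def)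
qed

lemma Scl_deriv:
  assumes "0 < y" "y < 1"
  shows "(Scl has_real_derivative (- 2 * pi * ln (2 * sin (pi * y)))) (at y)"
proof -
  define a where "a = y / 2"
  define b where "b = (1 + y) / 2"
  define G where "G t = - 2 * pi * ln (2 * sin (pi * t))" for t
  have ab: "0 < a" "a < y" "y < b" "b < 1" using assms by (auto simp: a_def b_def)
  have Gc: "continuous_on {a..b} G"
    unfolding G_def
  proof (intro continuous_intros ballI)
    fix x assume "x \<in> {a..b}"
    hence "0 < sin (pi * x)" using ab by (intro sin_gt_zero) auto
    thus "2 * sin (pi * x) \<noteq> 0" by simp
  qed
  have "((\<lambda>x. integral {a..x} G) has_real_derivative G y) (at y within {a..b})"
    using ab by (intro integral_has_real_derivative Gc) auto
  hence "((\<lambda>x. integral {a..x} G) has_real_derivative G y) (at y)"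
    using ab by (simp add: at_within_Icc_at)
  hence d: "((\<lambda>x. Scl a + integral {a..x} G) has_real_derivative G y) (at y)"
    by (auto intro!: derivative_eq_intros)
  show ?thesis
  proof (rule has_field_derivative_transform_within_open[OF d[unfolded G_def]])
    show "open {a<..<b}" by simp
    show "y \<in> {a<..<b}" using ab by simp
    fix x assume x: "x \<in> {a<..<b}"
    have "(G has_integral (Scl x - Scl a)) {a..x}"
      unfolding G_def using x ab by (intro Scl_integral) auto
    hence "integral {a..x} G = Scl x - Scl a" by (rule integral_unique)
    thus "Scl a + integral {a..x} (\<lambda>t. - 2 * pi * ln (2 * sin (pi * t))) = Scl x"
      unfolding G_def[symmetric] by simp
  qed
qed

lemma ln_sin_integral:
  "((\<lambda>y. y ^ a * ln (2 * sin (pi * y))) has_integral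
      (real a / (2 * pi) * integral {0..1} (\<lambda>y. y ^ (a - 1) * Scl y))) {0..1}"
proof -
  define H where "H y = - (1 / (2 * pi)) * (y ^ a * Scl y)" for y
  define D where "D y = - (1 / (2 * pi)) * (real a * y ^ (a - 1) * Scl y + y ^ a * (- 2 * pi * ln (2 * sin (pi * y))))" for y
  have Hc: "continuous_on {0..1} H"
    unfolding H_def using continuous_on_subset[OF Scl_cont]
    by (intro continuous_intros) auto
  have Hd: "(H has_vector_derivative D y) (at y)" if "y \<in> {0<..<1}" for y
  proof -
    have "(H has_real_derivative D y) (at y)"
      unfolding H_def D_def using that
      by (auto intro!: derivative_eq_intros Scl_deriv simp: field_simps)
    thus ?thesis by (simp add: has_real_derivative_iff_has_vector_derivative)
  qed
  have i1: "(D has_integral (H 1 - H 0)) {0..1}"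
    by (rule fundamental_theorem_of_calculus_interior[OF _ Hc Hd]) auto
  have "H 1 - H 0 = 0" by (simp add: H_def Scl_0 Scl_1)
  with i1 have i1': "(D has_integral 0) {0..1}" by simp
  have cc: "continuous_on {0..1} (\<lambda>y. y ^ (a - 1) * Scl y)"
    using continuous_on_subset[OF Scl_cont] by (intro continuous_intros) auto
  have i2: "((\<lambda>y. real a / (2 * pi) * (y ^ (a - 1) * Scl y)) has_integral
       (real a / (2 * pi) * integral {0..1} (\<lambda>y. y ^ (a - 1) * Scl y))) {0..1}"
    by (intro has_integral_mult_right integrable_integral integrable_continuous_interval cc)
  have "((\<lambda>y. D y + real a / (2 * pi) * (y ^ (a - 1) * Scl y)) has_integral
       (0 + real a / (2 * pi) * integral {0..1} (\<lambda>y. y ^ (a - 1) * Scl y))) {0..1}"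
    by (rule has_integral_add[OF i1' i2])
  moreover have "D y + real a / (2 * pi) * (y ^ (a - 1) * Scl y) = y ^ a * ln (2 * sin (pi * y))" for y
    unfolding D_def by (simp add: field_simps)
  ultimately show ?thesis by simp
qed

lemma pow_pred_mult: "0 < b \<Longrightarrow> (x::real) * x ^ (b - Suc 0) = x ^ b"
  by (metis Suc_pred power_Suc)

fun scI :: "nat \<Rightarrow> real \<Rightarrow> real \<times> real" where
  "scI 0 u = (0, 0)"
| "scI (Suc b) u = (- u + real (Suc b) * u * snd (scI b u), - real (Suc b) * u * fst (scI b u))"

lemma sc_integrals:
  fixes w :: real
  assumes w: "sin w = 0" "cos w = 1" "w \<noteq> 0"
  shows "((\<lambda>y. y ^ b * sin (w * y)) has_integral fst (scI b (1 / w))) {0..1} \<and>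
         ((\<lambda>y. y ^ b * cos (w * y)) has_integral snd (scI b (1 / w))) {0..1}"
proof (induction b)
  case 0
  have a: "((\<lambda>y. sin (w * y)) has_integral ((- cos (w * 1) / w) - (- cos (w * 0) / w))) {0..1}"
  proof (rule fundamental_theorem_of_calculus)
    fix x :: real
    have "((\<lambda>y. - cos (w * y) / w) has_real_derivative sin (w * x)) (at x)"
      using w by (auto intro!: derivative_eq_intros simp: field_simps)
    thus "((\<lambda>y. - cos (w * y) / w) has_vector_derivative sin (w * x)) (at x within {0..1})"
      by (simp add: has_real_derivative_iff_has_vector_derivative has_vector_derivative_at_within)
  qed simp
  have b: "((\<lambda>y. cos (w * y)) has_integral ((sin (w * 1) / w) - (sin (w * 0) / w))) {0..1}"
  proof (rule fundamental_theorem_of_calculus)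
    fix x :: real
    have "((\<lambda>y. sin (w * y) / w) has_real_derivative cos (w * x)) (at x)"
      using w by (auto intro!: derivative_eq_intros simp: field_simps)
    thus "((\<lambda>y. sin (w * y) / w) has_vector_derivative cos (w * x)) (at x within {0..1})"
      by (simp add: has_real_derivative_iff_has_vector_derivative has_vector_derivative_at_within)
  qed simp
  show ?case using a b w by simp
next
  case (Suc b)
  from Suc.IH have IHs: "((\<lambda>y. y ^ b * sin (w * y)) has_integral fst (scI b (1 / w))) {0..1}"
    and IHc: "((\<lambda>y. y ^ b * cos (w * y)) has_integral snd (scI b (1 / w))) {0..1}" by auto
  define F where "F y = - (y ^ Suc b * cos (w * y)) / w" for y
  define F' where "F' y = - (real (Suc b) * y ^ b * cos (w * y)) / w + y ^ Suc b * sin (w * y)" for y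
  have a: "(F' has_integral (F 1 - F 0)) {0..1}"
  proof (rule fundamental_theorem_of_calculus)
    fix x :: real
    have "(F has_real_derivative F' x) (at x)"
      unfolding F_def F'_def using w by (auto intro!: derivative_eq_intros simp: field_simps pow_pred_mult)
    thus "(F has_vector_derivative F' x) (at x within {0..1})"
      by (simp add: has_real_derivative_iff_has_vector_derivative has_vector_derivative_at_within)
  qed simp
  have "((\<lambda>y. F' y + real (Suc b) / w * (y ^ b * cos (w * y))) has_integral
          (F 1 - F 0 + real (Suc b) / w * snd (scI b (1 / w)))) {0..1}"
    by (intro has_integral_add a has_integral_mult_right IHc)
  moreover have "F' y + real (Suc b) / w * (y ^ b * cos (w * y)) = y ^ Suc b * sin (w * y)" for y
    unfolding F'_def using w by (simp add: field_simps)
  moreover have "F 1 - F 0 + real (Suc b) / w * snd (scI b (1 / w)) = fst (scI (Suc b) (1 / w))"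
    unfolding F_def using w by (simp add: field_simps)
  ultimately have A: "((\<lambda>y. y ^ Suc b * sin (w * y)) has_integral fst (scI (Suc b) (1 / w))) {0..1}"
    by simp
  define G where "G y = (y ^ Suc b * sin (w * y)) / w" for y
  define G' where "G' y = (real (Suc b) * y ^ b * sin (w * y)) / w + y ^ Suc b * cos (w * y)" for y
  have b: "(G' has_integral (G 1 - G 0)) {0..1}"
  proof (rule fundamental_theorem_of_calculus)
    fix x :: real
    have "(G has_real_derivative G' x) (at x)"
      unfolding G_def G'_def using w by (auto intro!: derivative_eq_intros simp: field_simps pow_pred_mult)
    thus "(G has_vector_derivative G' x) (at x within {0..1})"
      by (simp add: has_real_derivative_iff_has_vector_derivative has_vector_derivative_at_within)
  qed simp
  have "((\<lambda>y. G' y - real (Suc b) / w * (y ^ b * sin (w * y))) has_integral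
          (G 1 - G 0 - real (Suc b) / w * fst (scI b (1 / w)))) {0..1}"
    by (intro has_integral_diff b has_integral_mult_right IHs)
  moreover have "G' y - real (Suc b) / w * (y ^ b * sin (w * y)) = y ^ Suc b * cos (w * y)" for y
    unfolding G'_def using w by (simp add: field_simps)
  moreover have "G 1 - G 0 - real (Suc b) / w * fst (scI b (1 / w)) = snd (scI (Suc b) (1 / w))"
    unfolding G_def using w by (simp add: field_simps)
  ultimately have B: "((\<lambda>y. y ^ Suc b * cos (w * y)) has_integral snd (scI (Suc b) (1 / w))) {0..1}"
    by simp
  from A B show ?case ..
qed

lemma sc_integral_k:
  "((\<lambda>y. y ^ b * sin (2 * pi * real (Suc k) * y)) has_integral fst (scI b (1 / (2 * pi * real (Suc k))))) {0..1}"
proof -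
  have i: "real (Suc k) \<in> \<int>" by (rule Ints_of_nat)
  have "sin (2 * pi * real (Suc k)) = 0" by (rule sin_integer_2pi[OF i])
  moreover have "cos (2 * pi * real (Suc k)) = 1" by (rule cos_integer_2pi[OF i])
  moreover have "2 * pi * real (Suc k) \<noteq> 0" by simp
  ultimately show ?thesis using sc_integrals[of "2 * pi * real (Suc k)" b] by blast
qed

lemma yb_Scl_sums:
  "(\<lambda>k. fst (scI b (1 / (2 * pi * real (Suc k)))) / (real (Suc k))\<^sup>2) sums integral {0..1} (\<lambda>y. y ^ b * Scl y)"
proof -
  define f where "f n y = (\<Sum>k<n. y ^ b * sin (2 * pi * real (Suc k) * y) / (real (Suc k))\<^sup>2)" for n y
  define C where "C = (\<Sum>k. 1 / (real (Suc k))\<^sup>2)"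
  have fint: "(f n has_integral (\<Sum>k<n. fst (scI b (1 / (2 * pi * real (Suc k)))) / (real (Suc k))\<^sup>2)) {0..1}" for n
    unfolding f_def by (intro has_integral_sum finite_lessThan has_integral_divide sc_integral_k)
  have bound: "norm (f n y) \<le> C" if "y \<in> {0..1}" for n y
  proof -
    have "norm (f n y) \<le> (\<Sum>k<n. norm (y ^ b * sin (2 * pi * real (Suc k) * y) / (real (Suc k))\<^sup>2))"
      unfolding f_def by (rule norm_sum)
    also have "\<dots> \<le> (\<Sum>k<n. 1 / (real (Suc k))\<^sup>2)"
    proof (rule sum_mono)
      fix k assume "k \<in> {..<n}"
      have "\<bar>y ^ b * sin (2 * pi * real (Suc k) * y)\<bar> \<le> 1"
        using that abs_sin_le_one[of "2 * pi * real (Suc k) * y"]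
        by (auto simp: abs_mult intro!: mult_le_one power_le_one)
      thus "norm (y ^ b * sin (2 * pi * real (Suc k) * y) / (real (Suc k))\<^sup>2) \<le> 1 / (real (Suc k))\<^sup>2"
        by (simp add: abs_mult divide_right_mono del: of_nat_Suc)
    qed
    also have "\<dots> \<le> C" unfolding C_def
      by (rule sum_le_suminf[OF summable_inv_sq]) auto
    finally show ?thesis .
  qed
  have conv: "(\<lambda>n. f n y) \<longlonglongrightarrow> y ^ b * Scl y" if "y \<in> {0..1}" for y
  proof -
    have "summable (\<lambda>k. sin (2 * pi * real (Suc k) * y) / (real (Suc k))\<^sup>2)"
    proof (rule summable_comparison_test'[OF summable_inv_sq])
      fix k :: nat
      show "norm (sin (2 * pi * real (Suc k) * y) / (real (Suc k))\<^sup>2) \<le> 1 / (real (Suc k))\<^sup>2"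
        using abs_sin_le_one[of "2 * pi * real (Suc k) * y"]
        by (simp add: abs_mult divide_right_mono del: of_nat_Suc)
    qed
    hence "(\<lambda>k. sin (2 * pi * real (Suc k) * y) / (real (Suc k))\<^sup>2) sums Scl y"
      by (simp add: Scl_def Sr_def summable_sums)
    hence "(\<lambda>k. y ^ b * (sin (2 * pi * real (Suc k) * y) / (real (Suc k))\<^sup>2)) sums (y ^ b * Scl y)"
      by (rule sums_mult)
    thus ?thesis unfolding f_def sums_def by (simp add: times_divide_eq_right)
  qed
  have fi: "f n integrable_on {0..1}" for n using fint[of n] by blast
  have Ci: "(\<lambda>y::real. C) integrable_on {0..1}" by (rule integrable_continuous_interval) (rule continuous_on_const)
  note dc = dominated_convergence[of f "{0..1}" "\<lambda>y. C" "\<lambda>y. y ^ b * Scl y", OF fi Ci bound conv]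
  have "(\<lambda>n. integral {0..1} (f n)) = (\<lambda>n. \<Sum>k<n. fst (scI b (1 / (2 * pi * real (Suc k)))) / (real (Suc k))\<^sup>2)"
    using fint by (intro ext integral_unique)
  with dc(2) show ?thesis unfolding sums_def by simp
qed

definition Rm :: "nat \<Rightarrow> real \<Rightarrow> real" where
  "Rm m u = fact (m - 1) * (\<Sum>j=1..m div 2. (-1) ^ j * u ^ (2 * j + 1) / fact (m - 2 * j))
     - (if even m then (-1) ^ (m div 2) * fact (m - 1) * u ^ (m + 1) else 0)"

lemma Rm_rec:
  assumes "1 \<le> n"
  shows "Rm (n + 2) u = - (real n + 1) * u ^ 3 - real n * (real n + 1) * u\<^sup>2 * Rm n u"
proof -
  define N where "N = n div 2"
  have d: "(n + 2) div 2 = Suc N" by (simp add: N_def)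
  define g where "g j = (-1) ^ j * u ^ (2 * j + 1) / fact (n + 2 - 2 * j)" for j
  have "(\<Sum>j=1..(n + 2) div 2. g j) = g 1 + (\<Sum>j=Suc 1..Suc N. g j)"
    unfolding d by (rule sum.atLeast_Suc_atMost) simp
  also have "(\<Sum>j=Suc 1..Suc N. g j) = (\<Sum>j=1..N. g (Suc j))"
    by (rule sum.shift_bounds_cl_Suc_ivl)
  also have "(\<Sum>j=1..N. g (Suc j)) = - u\<^sup>2 * (\<Sum>j=1..N. (-1) ^ j * u ^ (2 * j + 1) / fact (n - 2 * j))"
    unfolding sum_distrib_left
  proof (rule sum.cong[OF refl])
    fix j assume "j \<in> {1..N}"
    have e: "n + 2 - 2 * Suc j = n - 2 * j" by simp
    show "g (Suc j) = - u\<^sup>2 * ((-1) ^ j * u ^ (2 * j + 1) / fact (n - 2 * j))"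
      unfolding g_def e by (simp add: power2_eq_square power_add field_simps)
  qed
  finally have S: "(\<Sum>j=1..(n + 2) div 2. g j) = g 1 - u\<^sup>2 * (\<Sum>j=1..N. (-1) ^ j * u ^ (2 * j + 1) / fact (n - 2 * j))"
    by simp
  have f1: "fact (n + 2 - 1) = (real n + 1) * real n * (fact (n - 1) :: real)"
  proof -
    obtain k where k: "n = Suc k" using assms by (cases n) auto
    show ?thesis unfolding k by (simp add: algebra_simps)
  qed
  have g1: "fact (n + 2 - 1) * g 1 = - (real n + 1) * u ^ 3"
  proof -
    have "fact (n + 2 - 1) = (real n + 1) * (fact n :: real)" by simp
    thus ?thesis unfolding g_def by (simp add: field_simps numeral_3_eq_3)
  qed
  have ev: "even (n + 2) = even n" by simp
  have pw: "(-1 :: real) ^ ((n + 2) div 2) = - ((-1) ^ (n div 2))" unfolding d N_def by simp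
  have "Rm (n + 2) u = fact (n + 2 - 1) * (\<Sum>j=1..(n + 2) div 2. g j)
      - (if even n then (-1) ^ ((n + 2) div 2) * fact (n + 2 - 1) * u ^ (n + 2 + 1) else 0)"
    unfolding Rm_def g_def ev by simp
  also have "\<dots> = - (real n + 1) * u ^ 3 - real n * (real n + 1) * u\<^sup>2 * Rm n u"
    unfolding S Rm_def N_def pw f1 using g1[unfolded f1]
    by (simp add: algebra_simps power2_eq_square power_add)
  finally show ?thesis .
qed

lemma scI_rec2:
  assumes "1 \<le> n"
  shows "fst (scI n u) = - u - real n * (real n - 1) * u\<^sup>2 * fst (scI (n - 2) u)"
proof (cases n)
  case 0 thus ?thesis using assms by simp
next
  case (Suc k)
  show ?thesis
  proof (cases k)
    case 0 thus ?thesis using Suc by simp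
  next
    case (Suc b)
    show ?thesis using \<open>n = Suc k\<close> Suc by (simp add: power2_eq_square algebra_simps)
  qed
qed

lemma scI_closed:
  assumes "1 \<le> m"
  shows "real (m - 1) * u\<^sup>2 * fst (scI (m - 2) u) = Rm m u"
  using assms
proof (induction m rule: less_induct)
  case (less m)
  show ?case
  proof (cases "m \<le> 2")
    case True
    hence "m = 1 \<or> m = 2" using less.prems by auto
    thus ?thesis by (auto simp: Rm_def)
  next
    case False
    then obtain n where n: "m = n + 2" "1 \<le> n" by (metis add.commute le_add_diff_inverse not_le Suc_leI One_nat_def add_2_eq_Suc' diff_is_0_eq' nat_le_linear zero_less_diff)
    have IH: "real (n - 1) * u\<^sup>2 * fst (scI (n - 2) u) = Rm n u"
      using less.IH[of n] n by simp
    have "real (m - 1) * u\<^sup>2 * fst (scI (m - 2) u) = (real n + 1) * u\<^sup>2 * fst (scI n u)"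
      using n by simp
    also have "\<dots> = - (real n + 1) * u ^ 3 - real n * (real n + 1) * u\<^sup>2 * (real (n - 1) * u\<^sup>2 * fst (scI (n - 2) u))"
      unfolding scI_rec2[OF n(2)] using n(2) by (simp add: of_nat_diff power2_eq_square algebra_simps numeral_3_eq_3)
    also have "\<dots> = Rm m u" unfolding IH n(1) by (rule Rm_rec[OF n(2), symmetric])
    finally show ?thesis .
  qed
qed

lemma zeta_sums:
  assumes "2 \<le> p"
  shows "(\<lambda>k. 1 / (real (Suc k)) ^ p) sums rzeta (real p)"
proof -
  have "summable (\<lambda>k. 1 / (real (Suc k)) ^ p)"
  proof (rule summable_comparison_test'[OF summable_inv_sq])
    fix k :: nat
    have "(real (Suc k))\<^sup>2 \<le> (real (Suc k)) ^ p"
      using assms by (intro power_increasing) auto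
    thus "norm (1 / (real (Suc k)) ^ p) \<le> 1 / (real (Suc k))\<^sup>2"
      by (simp add: divide_simps del: of_nat_Suc)
  qed
  moreover have "(\<lambda>k. 1 / (real (Suc k)) ^ p) = (\<lambda>k. 1 / (real (Suc k)) powr (real p))"
    by (simp add: powr_realpow)
  ultimately show ?thesis unfolding rzeta_def by (simp add: summable_sums)
qed

lemma zeta_sums_u:
  assumes "1 \<le> p"
  shows "(\<lambda>k. 2 * pi * (1 / (2 * pi * real (Suc k))) ^ (p + 1)) sums (rzeta (real p + 1) / (2 * pi) ^ p)"
proof -
  have "(\<lambda>k. 1 / (2 * pi) ^ p * (1 / (real (Suc k)) ^ (p + 1))) sums (1 / (2 * pi) ^ p * rzeta (real (p + 1)))"
    using assms by (intro sums_mult zeta_sums) auto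
  moreover have "2 * pi * (1 / (2 * pi * real (Suc k))) ^ (p + 1) = 1 / (2 * pi) ^ p * (1 / (real (Suc k)) ^ (p + 1))" for k
    by (simp add: power_mult_distrib field_simps del: of_nat_Suc)
  ultimately show ?thesis by (simp add: add.commute)
qed

definition Fm :: "nat \<Rightarrow> real" where
  "Fm m = fact (m - 1) * (\<Sum>j=1..m div 2. (-1) ^ j * rzeta (2 * real j + 1) / (fact (m - 2 * j) * (2 * pi) ^ (2 * j)))"

definition Am :: "nat \<Rightarrow> real" where
  "Am m = (if even m then (-1) ^ (m div 2) * fact (m - 1) * (rzeta (real m + 1) / (2 * pi) ^ m) else 0)"

lemma V_formula:
  assumes "1 \<le> m"
  shows "((\<lambda>y. y ^ (m - 1) * ln (2 * sin (pi * y))) has_integral (Fm m - Am m)) {0..1}"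
proof -
  define u where "u k = 1 / (2 * pi * real (Suc k))" for k
  have I: "(\<lambda>k. fst (scI (m - 2) (u k)) / (real (Suc k))\<^sup>2) sums integral {0..1} (\<lambda>y. y ^ (m - 1 - 1) * Scl y)"
    unfolding u_def using yb_Scl_sums[of "m - 2"] by (simp add: numeral_2_eq_2 diff_diff_left)
  have "(\<lambda>k. real (m - 1) / (2 * pi) * (fst (scI (m - 2) (u k)) / (real (Suc k))\<^sup>2)) sums
        (real (m - 1) / (2 * pi) * integral {0..1} (\<lambda>y. y ^ (m - 1 - 1) * Scl y))"
    by (rule sums_mult[OF I])
  moreover have "real (m - 1) / (2 * pi) * (fst (scI (m - 2) (u k)) / (real (Suc k))\<^sup>2) = 2 * pi * Rm m (u k)" for k
  proof -
    have "1 / (real (Suc k))\<^sup>2 = (2 * pi)\<^sup>2 * (u k)\<^sup>2"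
      unfolding u_def by (simp add: power_mult_distrib field_simps del: of_nat_Suc)
    hence "real (m - 1) / (2 * pi) * (fst (scI (m - 2) (u k)) / (real (Suc k))\<^sup>2)
        = 2 * pi * (real (m - 1) * (u k)\<^sup>2 * fst (scI (m - 2) (u k)))"
      by (simp add: power2_eq_square field_simps del: of_nat_Suc)
    thus ?thesis using scI_closed[OF assms] by simp
  qed
  ultimately have A: "(\<lambda>k. 2 * pi * Rm m (u k)) sums (real (m - 1) / (2 * pi) * integral {0..1} (\<lambda>y. y ^ (m - 1 - 1) * Scl y))"
    by simp
  have B: "(\<lambda>k. 2 * pi * Rm m (u k)) sums (Fm m - Am m)"
  proof -
    have s1: "(\<lambda>k. \<Sum>j=1..m div 2. (-1) ^ j / fact (m - 2 * j) * (2 * pi * (u k) ^ (2 * j + 1))) sums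
              (\<Sum>j=1..m div 2. (-1) ^ j / fact (m - 2 * j) * (rzeta (real (2 * j) + 1) / (2 * pi) ^ (2 * j)))"
      unfolding u_def by (intro sums_sum sums_mult zeta_sums_u) auto
    have s2: "(\<lambda>k. (if even m then (-1) ^ (m div 2) * fact (m - 1) else 0) * (2 * pi * (u k) ^ (m + 1))) sums
              ((if even m then (-1) ^ (m div 2) * fact (m - 1) else 0) * (rzeta (real m + 1) / (2 * pi) ^ m))"
      unfolding u_def using assms by (intro sums_mult zeta_sums_u) auto
    note s3 = sums_diff[OF sums_mult[OF s1, of "fact (m - 1)"] s2]
    have e1: "2 * pi * Rm m (u k) = fact (m - 1) * (\<Sum>j=1..m div 2. (-1) ^ j / fact (m - 2 * j) * (2 * pi * (u k) ^ (2 * j + 1))) -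
        (if even m then (-1) ^ (m div 2) * fact (m - 1) else 0) * (2 * pi * (u k) ^ (m + 1))" for k
    proof -
      have "2 * pi * (\<Sum>j=1..m div 2. (-1) ^ j * u k ^ (2 * j + 1) / fact (m - 2 * j))
          = (\<Sum>j=1..m div 2. (-1) ^ j / fact (m - 2 * j) * (2 * pi * (u k) ^ (2 * j + 1)))"
        unfolding sum_distrib_left by (intro sum.cong) auto
      thus ?thesis unfolding Rm_def by (simp add: algebra_simps)
    qed
    have e2: "fact (m - 1) * (\<Sum>j=1..m div 2. (-1) ^ j / fact (m - 2 * j) * (rzeta (real (2 * j) + 1) / (2 * pi) ^ (2 * j))) -
        (if even m then (-1) ^ (m div 2) * fact (m - 1) else 0) * (rzeta (real m + 1) / (2 * pi) ^ m) = Fm m - Am m"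
    proof -
      have "(\<Sum>j=1..m div 2. (-1) ^ j / fact (m - 2 * j) * (rzeta (real (2 * j) + 1) / (2 * pi) ^ (2 * j)))
          = (\<Sum>j=1..m div 2. (-1) ^ j * rzeta (2 * real j + 1) / (fact (m - 2 * j) * (2 * pi) ^ (2 * j)))"
        by (intro sum.cong) auto
      thus ?thesis unfolding Fm_def Am_def by simp
    qed
    from s3 show ?thesis unfolding e1[symmetric] e2 .
  qed
  from A B have eq: "real (m - 1) / (2 * pi) * integral {0..1} (\<lambda>y. y ^ (m - 1 - 1) * Scl y) = Fm m - Am m"
    using sums_unique2 by blast
  show ?thesis using ln_sin_integral[of "m - 1"] unfolding eq .
qed

lemma nonneg_double_swap:
  fixes a :: "nat \<Rightarrow> nat \<Rightarrow> real"
  assumes nn: "\<And>j k. 0 \<le> a j k"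
    and rows: "\<And>j. (\<lambda>k. a j k) sums b j"
    and tot: "b sums B"
  shows "(\<lambda>k. \<Sum>j. a j k) sums B"
proof -
  have sb: "summable b" using tot by (simp add: sums_iff)
  have sr: "summable (\<lambda>k. a j k)" for j using rows[of j] by (simp add: sums_iff)
  have b_eq: "b j = (\<Sum>k. a j k)" for j using rows[of j] by (simp add: sums_iff)
  have bnn: "0 \<le> b j" for j unfolding b_eq using nn by (simp add: suminf_nonneg sr)
  have ajk: "a j k \<le> b j" for j k
  proof -
    have "sum (\<lambda>k. a j k) {k} \<le> (\<Sum>k. a j k)" by (rule sum_le_suminf[OF sr]) (auto simp: nn)
    thus ?thesis unfolding b_eq by simp
  qed
  have sc: "summable (\<lambda>j. a j k)" for k
  proof (rule bounded_imp_summable)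
    show "0 \<le> a j k" for j by (rule nn)
    show "sum (\<lambda>j. a j k) {..n} \<le> B" for n
    proof -
      have "sum (\<lambda>j. a j k) {..n} \<le> sum b {..n}" by (intro sum_mono ajk)
      also have "\<dots> \<le> B" using sum_le_suminf[OF sb, of "{..n}"] bnn tot by (simp add: sums_iff)
      finally show ?thesis .
    qed
  qed
  define c where "c k = (\<Sum>j. a j k)" for k
  have cnn: "0 \<le> c k" for k unfolding c_def using nn by (simp add: suminf_nonneg sc)
  have partial: "sum c {..<K} \<le> B" for K
  proof -
    have "sum c {..<K} = (\<Sum>j. \<Sum>k<K. a j k)"
      unfolding c_def by (rule suminf_sum[symmetric]) (rule sc)
    also have "\<dots> \<le> (\<Sum>j. b j)"
    proof (rule suminf_le)
      show "(\<Sum>k<K. a j k) \<le> b j" for j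
        unfolding b_eq by (rule sum_le_suminf[OF sr]) (auto simp: nn)
      show "summable (\<lambda>j. \<Sum>k<K. a j k)" by (intro summable_sum sc)
    qed (rule sb)
    also have "\<dots> = B" using tot by (simp add: sums_iff)
    finally show ?thesis .
  qed
  have scc: "summable c"
  proof (rule bounded_imp_summable[OF cnn])
    show "sum c {..n} \<le> B" for n using partial[of "Suc n"] by (simp add: lessThan_Suc_atMost)
  qed
  have le1: "suminf c \<le> B"
    using partial by (intro suminf_le_const scc) auto
  have le2: "B \<le> suminf c"
  proof -
    have "sum b {..<J} \<le> suminf c" for J
    proof -
      have "sum b {..<J} = (\<Sum>k. \<Sum>j<J. a j k)"
        unfolding b_eq by (rule suminf_sum[symmetric]) (rule sr)
      also have "\<dots> \<le> suminf c"
      proof (rule suminf_le)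
        show "(\<Sum>j<J. a j k) \<le> c k" for k
          unfolding c_def by (rule sum_le_suminf[OF sc]) (auto simp: nn)
        show "summable (\<lambda>k. \<Sum>j<J. a j k)" by (intro summable_sum sr)
      qed (rule scc)
      finally show ?thesis .
    qed
    moreover have "(\<lambda>J. sum b {..<J}) \<longlonglongrightarrow> B" using tot by (simp add: sums_def)
    ultimately show ?thesis by (intro LIMSEQ_le_const2[of "\<lambda>J. sum b {..<J}"]) auto
  qed
  from le1 le2 have "suminf c = B" by simp
  with scc show ?thesis unfolding c_def[symmetric] by (simp add: sums_iff)
qed

lemma neg_ln_series:
  fixes q :: real
  assumes "0 \<le> q" "q < 1"
  shows "(\<lambda>n. q ^ Suc n / real (Suc n)) sums (- ln (1 - q))"
proof -
  have "(\<lambda>n. - ((-(-q)) ^ n) / of_nat n) sums ln (1 + (-q))"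
    by (rule ln_series') (use assms in auto)
  hence "(\<lambda>n. - (- (q ^ n) / real n)) sums (- ln (1 - q))"
    by (intro sums_minus) simp
  hence "(\<lambda>n. q ^ n / real n) sums (- ln (1 - q))" by simp
  thus ?thesis using sums_Suc_iff[of "\<lambda>n. q ^ n / real n" "- ln (1 - q)"] by simp
qed

lemma ln_sin_sums:
  fixes y :: real
  assumes y: "0 < y" "y < 1"
  shows "(\<lambda>j. - ln (1 - y\<^sup>2 / (real (Suc j))\<^sup>2)) sums ln (pi * y / sin (pi * y))"
proof -
  have sp: "0 < sin (pi * y)" using y by (intro sin_gt_zero) auto
  have pos: "0 < 1 - y\<^sup>2 / (real k)\<^sup>2" if "1 \<le> k" for k
  proof -
    have "y\<^sup>2 < 1" using y by (simp add: power_less_one_iff abs_less_iff)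
    also have "1 \<le> (real k)\<^sup>2" using that by simp
    finally have "y\<^sup>2 < (real k)\<^sup>2" .
    moreover have "0 < (real k)\<^sup>2" using that by simp
    ultimately have "y\<^sup>2 / (real k)\<^sup>2 < 1" by (simp add: divide_less_eq)
    thus ?thesis by simp
  qed
  have "(\<lambda>n. \<Prod>k=1..n. 1 - y\<^sup>2 / (of_nat k)\<^sup>2) \<longlonglongrightarrow> sin (pi * y) / (pi * y)"
    using y by (intro sin_product_formula_real') auto
  hence "(\<lambda>n. ln (\<Prod>k=1..n. 1 - y\<^sup>2 / (of_nat k)\<^sup>2)) \<longlonglongrightarrow> ln (sin (pi * y) / (pi * y))"
    by (rule tendsto_ln) (use sp y in simp)
  moreover have "ln (\<Prod>k=1..n. 1 - y\<^sup>2 / (of_nat k)\<^sup>2) = (\<Sum>j<n. ln (1 - y\<^sup>2 / (real (Suc j))\<^sup>2))" for n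
  proof -
    have "ln (\<Prod>k=1..n. 1 - y\<^sup>2 / (of_nat k)\<^sup>2) = (\<Sum>k=1..n. ln (1 - y\<^sup>2 / (real k)\<^sup>2))"
    proof (rule ln_prod)
      fix i assume "i \<in> {1..n}"
      hence "0 < 1 - y\<^sup>2 / (real i)\<^sup>2" by (intro pos) auto
      thus "1 - y\<^sup>2 / (real i)\<^sup>2 \<noteq> 0" by linarith
    qed simp
    also have "\<dots> = (\<Sum>j<n. ln (1 - y\<^sup>2 / (real (Suc j))\<^sup>2))"
      by (simp only: One_nat_def sum.atLeast1_atMost_eq)
    finally show ?thesis .
  qed
  ultimately have "(\<lambda>j. ln (1 - y\<^sup>2 / (real (Suc j))\<^sup>2)) sums ln (sin (pi * y) / (pi * y))"
    by (simp add: sums_def)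
  hence "(\<lambda>j. - ln (1 - y\<^sup>2 / (real (Suc j))\<^sup>2)) sums (- ln (sin (pi * y) / (pi * y)))"
    by (rule sums_minus)
  moreover have "- ln (sin (pi * y) / (pi * y)) = ln (pi * y / sin (pi * y))"
    using sp y by (simp add: ln_div)
  ultimately show ?thesis by simp
qed

lemma zeta_gen_sums:
  fixes y :: real
  assumes y: "0 < y" "y < 1"
  shows "(\<lambda>k. rzeta (2 * real (Suc k)) * y ^ (2 * Suc k) / real (Suc k)) sums ln (pi * y / sin (pi * y))"
proof -
  define a where "a j k = y ^ (2 * Suc k) / (real (Suc k) * (real (Suc j)) ^ (2 * Suc k))" for j k
  have nn: "0 \<le> a j k" for j k unfolding a_def using y by simp
  have rows: "(\<lambda>k. a j k) sums (- ln (1 - y\<^sup>2 / (real (Suc j))\<^sup>2))" for j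
  proof -
    define q where "q = y\<^sup>2 / (real (Suc j))\<^sup>2"
    have q: "0 \<le> q" "q < 1"
    proof -
      show "0 \<le> q" unfolding q_def by simp
      have "y\<^sup>2 < 1" using y by (simp add: power_less_one_iff abs_less_iff)
      also have "1 \<le> (real (Suc j))\<^sup>2" by simp
      finally show "q < 1" unfolding q_def by (simp add: field_simps)
    qed
    have "q ^ Suc n / real (Suc n) = a j n" for n
    proof -
      have "q ^ Suc n = y ^ (2 * Suc n) / (real (Suc j)) ^ (2 * Suc n)"
        unfolding q_def by (simp only: power_divide power_mult)
      thus ?thesis unfolding a_def by simp
    qed
    with neg_ln_series[OF q] show ?thesis unfolding q_def by simp
  qed
  have sw: "(\<lambda>k. \<Sum>j. a j k) sums ln (pi * y / sin (pi * y))"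
    by (rule nonneg_double_swap[OF nn rows ln_sin_sums[OF y]])
  have "(\<Sum>j. a j k) = rzeta (2 * real (Suc k)) * y ^ (2 * Suc k) / real (Suc k)" for k
  proof -
    have "(\<lambda>j. y ^ (2 * Suc k) / real (Suc k) * (1 / (real (Suc j)) ^ (2 * Suc k))) sums
          (y ^ (2 * Suc k) / real (Suc k) * rzeta (real (2 * Suc k)))"
      by (intro sums_mult zeta_sums) auto
    moreover have "y ^ (2 * Suc k) / real (Suc k) * (1 / (real (Suc j)) ^ (2 * Suc k)) = a j k" for j
      unfolding a_def by simp
    ultimately have "(\<lambda>j. a j k) sums (y ^ (2 * Suc k) / real (Suc k) * rzeta (real (2 * Suc k)))" by simp
    hence "(\<Sum>j. a j k) = y ^ (2 * Suc k) / real (Suc k) * rzeta (real (2 * Suc k))" by (rule sums_unique[symmetric])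
    moreover have e: "real (2 * Suc k) = 2 * real (Suc k)" by (simp only: of_nat_mult)
    ultimately show ?thesis by (simp only: e) (simp add: field_simps del: of_nat_Suc)
  qed
  with sw show ?thesis by simp
qed

lemma power_integral01: "((\<lambda>y::real. y ^ p) has_integral (1 / (real p + 1))) {0..1}"
proof -
  have "((\<lambda>y::real. y ^ p) has_integral (1 ^ (p + 1) / (real p + 1) - 0 ^ (p + 1) / (real p + 1))) {0..1}"
  proof (rule fundamental_theorem_of_calculus)
    fix x :: real
    have "((\<lambda>y. y ^ Suc p) has_real_derivative real (Suc p) * x ^ p) (at x)"
      using DERIV_pow[of "Suc p" x] by simp
    hence "((\<lambda>y. y ^ Suc p / (real p + 1)) has_real_derivative real (Suc p) * x ^ p / (real p + 1)) (at x)"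
      by (rule DERIV_cdivide)
    hence "((\<lambda>y. y ^ (p + 1) / (real p + 1)) has_real_derivative x ^ p) (at x)"
      by (simp add: add.commute)
    thus "((\<lambda>y. y ^ (p + 1) / (real p + 1)) has_vector_derivative x ^ p) (at x within {0..1})"
      by (simp add: has_real_derivative_iff_has_vector_derivative has_vector_derivative_at_within)
  qed simp
  thus ?thesis by simp
qed

lemma ylny_integral:
  assumes "1 \<le> m"
  shows "((\<lambda>y. y ^ (m - 1) * ln y) has_integral (- 1 / (real m)\<^sup>2)) {0..1}"
proof -
  define F where "F y = y ^ m * ln y / real m - y ^ m / (real m)\<^sup>2" for y :: real
  have m0: "real m \<noteq> 0" using assms by simp
  have F0: "F 0 = 0" unfolding F_def using assms by simp
  have F1: "F 1 = - 1 / (real m)\<^sup>2" unfolding F_def by simp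
  have lim0: "(F \<longlongrightarrow> F 0) (at_right 0)"
  proof -
    have a: "((\<lambda>y::real. y * ln y) \<longlongrightarrow> 0) (at_right 0)" by real_asymp
    have b: "((\<lambda>y::real. y ^ (m - 1)) \<longlongrightarrow> 0 ^ (m - 1)) (at_right 0)"
      by (intro tendsto_intros)
    have "((\<lambda>y. y ^ (m - 1) * (y * ln y) / real m - y ^ (m - 1) * y / (real m)\<^sup>2) \<longlongrightarrow>
          0 ^ (m - 1) * 0 / real m - 0 ^ (m - 1) * 0 / (real m)\<^sup>2) (at_right 0)"
      by (intro tendsto_intros a b) (use assms in \<open>auto intro!: tendsto_ident_at\<close>)
    moreover have "y ^ (m - 1) * (y * ln y) / real m - y ^ (m - 1) * y / (real m)\<^sup>2 = F y" for y
    proof -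
      have "y ^ (m - 1) * y = y ^ m" using assms by (simp add: power_Suc2[symmetric])
      thus ?thesis unfolding F_def by (simp add: mult.assoc[symmetric])
    qed
    ultimately show ?thesis using F0 by simp
  qed
  have Fc: "continuous_on {0..1} F"
  proof (rule continuous_on_eq_continuous_within[THEN iffD2], rule ballI)
    fix x :: real assume x: "x \<in> {0..1}"
    show "continuous (at x within {0..1}) F"
    proof (cases "x = 0")
      case True
      thus ?thesis using lim0 by (simp add: continuous_within at_within_Icc_at_right)
    next
      case False
      with x have "0 < x" by simp
      hence "isCont F x" unfolding F_def using assms by (intro continuous_intros) auto
      thus ?thesis by (rule continuous_at_imp_continuous_within)
    qed
  qed
  have Fd: "(F has_vector_derivative (x ^ (m - 1) * ln x)) (at x)" if "x \<in> {0<..<1}" for x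
  proof -
    have x: "0 < x" using that by simp
    have "(F has_real_derivative (x ^ (m - 1) * ln x)) (at x)"
      unfolding F_def using x m0 assms pow_pred_mult[of m x]
      by (auto intro!: derivative_eq_intros simp: field_simps power2_eq_square)
    thus ?thesis by (simp add: has_real_derivative_iff_has_vector_derivative)
  qed
  have "((\<lambda>y. y ^ (m - 1) * ln y) has_integral (F 1 - F 0)) {0..1}"
    by (rule fundamental_theorem_of_calculus_interior[OF _ Fc Fd]) auto
  thus ?thesis using F0 F1 by simp
qed

lemma rzeta_nonneg: "2 \<le> p \<Longrightarrow> 0 \<le> rzeta (real p)"
proof -
  assume p: "2 \<le> p"
  have s: "(\<lambda>k. 1 / (real (Suc k)) ^ p) sums rzeta (real p)" using zeta_sums[OF p] .
  have "0 \<le> (\<Sum>k. 1 / (real (Suc k)) ^ p)"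
    using s by (intro suminf_nonneg) (auto simp: sums_iff)
  thus ?thesis using s by (simp add: sums_iff)
qed

lemma rzeta_le2: "2 \<le> p \<Longrightarrow> rzeta (real p) \<le> rzeta 2"
proof -
  assume p: "2 \<le> p"
  have s1: "(\<lambda>k. 1 / (real (Suc k)) ^ p) sums rzeta (real p)" using zeta_sums[OF p] .
  have s2: "(\<lambda>k. 1 / (real (Suc k)) ^ 2) sums rzeta (real 2)" using zeta_sums[of 2] by simp
  have "(\<Sum>k. 1 / (real (Suc k)) ^ p) \<le> (\<Sum>k. 1 / (real (Suc k)) ^ 2)"
  proof (rule suminf_le)
    fix k
    have "(real (Suc k))\<^sup>2 \<le> (real (Suc k)) ^ p" using p by (intro power_increasing) auto
    thus "1 / real (Suc k) ^ p \<le> 1 / real (Suc k) ^ 2"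
      by (simp add: divide_simps del: of_nat_Suc)
  qed (use s1 s2 in \<open>auto simp: sums_iff\<close>)
  thus ?thesis using s1 s2 by (simp add: sums_iff)
qed

lemma T_sums:
  assumes m: "1 \<le> m"
  shows "(\<lambda>k. rzeta (2 * real (Suc k)) / (real (Suc k) * (2 * real (Suc k) + real m)))
           sums (ln (2 * pi) / real m - 1 / (real m)\<^sup>2 - (Fm m - Am m))"
proof -
  define z where "z k = rzeta (2 * real (Suc k))" for k
  have zr: "z k = rzeta (real (2 * Suc k))" for k
  proof -
    have e: "real (2 * Suc k) = 2 * real (Suc k)" by (simp only: of_nat_mult)
    show ?thesis unfolding z_def e ..
  qed
  have znn: "0 \<le> z k" for k unfolding zr by (rule rzeta_nonneg) simp
  have zle: "z k \<le> rzeta 2" for k unfolding zr by (rule rzeta_le2) simp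
  define t where "t k = z k / (real (Suc k) * (2 * real (Suc k) + real m))" for k
  define p where "p k = 2 * Suc k + (m - 1)" for k
  have pk: "real (p k) + 1 = 2 * real (Suc k) + real m" for k
    unfolding p_def using m by (simp add: of_nat_diff)
  define f where "f N y = (\<Sum>k<N. z k / real (Suc k) * y ^ p k)" for N and y :: real
  define g where "g y = y ^ (m - 1) * ln (pi * y / sin (pi * y))" for y :: real
  have tnn: "0 \<le> t k" for k unfolding t_def using znn[of k] by simp
  have tsum: "summable t"
  proof (rule summable_comparison_test'[OF summable_mult[OF summable_inv_sq, of "rzeta 2"]])
    fix k
    have d: "(real (Suc k))\<^sup>2 \<le> real (Suc k) * (2 * real (Suc k) + real m)"
      by (simp add: power2_eq_square del: of_nat_Suc) 
    have "t k \<le> rzeta 2 / (real (Suc k) * (2 * real (Suc k) + real m))"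
      unfolding t_def by (intro divide_right_mono zle) simp
    also have "\<dots> \<le> rzeta 2 / (real (Suc k))\<^sup>2"
    proof (rule divide_left_mono[OF d])
      show "0 \<le> rzeta 2" using zle[of 0] znn[of 0] by simp
      have "0 < real (Suc k) * (2 * real (Suc k) + real m)" by (intro mult_pos_pos) auto
      moreover have "0 < (real (Suc k))\<^sup>2" by simp
      ultimately show "0 < real (Suc k) * (2 * real (Suc k) + real m) * (real (Suc k))\<^sup>2"
        by (rule mult_pos_pos)
    qed
    finally show "norm (t k) \<le> rzeta 2 * (1 / (real (Suc k))\<^sup>2)" using tnn[of k] by simp
  qed
  have fint: "(f N has_integral (\<Sum>k<N. t k)) {0<..<1}" for N
  proof -
    have "(f N has_integral (\<Sum>k<N. z k / real (Suc k) * (1 / (real (p k) + 1)))) {0..1}"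
      unfolding f_def by (intro has_integral_sum finite_lessThan has_integral_mult_right power_integral01)
    moreover have "(\<Sum>k<N. z k / real (Suc k) * (1 / (real (p k) + 1))) = (\<Sum>k<N. t k)"
      unfolding t_def pk by simp
    ultimately show ?thesis by (simp add: has_integral_Icc_iff_Ioo)
  qed
  have fi: "f N integrable_on {0<..<1}" for N using fint[of N] by blast
  have mono: "f N y \<le> f (Suc N) y" if "y \<in> {0<..<1}" for N y
    unfolding f_def using that znn[of N] by simp
  have conv: "(\<lambda>N. f N y) \<longlonglongrightarrow> g y" if "y \<in> {0<..<1}" for y
  proof -
    have "(\<lambda>k. z k * y ^ (2 * Suc k) / real (Suc k)) sums ln (pi * y / sin (pi * y))"
      unfolding z_def using that by (intro zeta_gen_sums) auto
    hence "(\<lambda>k. z k * y ^ (2 * Suc k) / real (Suc k) * y ^ (m - 1)) sums (ln (pi * y / sin (pi * y)) * y ^ (m - 1))"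
      by (rule sums_mult2)
    moreover have eq: "(\<lambda>k. z k * y ^ (2 * Suc k) / real (Suc k) * y ^ (m - 1)) = (\<lambda>k. z k / real (Suc k) * y ^ p k)"
      by (rule ext) (simp add: p_def power_add mult_ac)
    ultimately have "(\<lambda>k. z k / real (Suc k) * y ^ p k) sums (ln (pi * y / sin (pi * y)) * y ^ (m - 1))"
      by (simp only: eq)
    moreover have "ln (pi * y / sin (pi * y)) * y ^ (m - 1) = g y" by (simp add: g_def mult.commute)
    ultimately have "(\<lambda>k. z k / real (Suc k) * y ^ p k) sums g y" by simp
    thus ?thesis unfolding sums_def f_def .
  qed
  have bnd: "bounded (range (\<lambda>N. integral {0<..<1} (f N)))"
  proof -
    have "norm (integral {0<..<1} (f N)) \<le> suminf t" for N
    proof -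
      have "integral {0<..<1} (f N) = (\<Sum>k<N. t k)" using fint[of N] by (rule integral_unique)
      moreover have "(\<Sum>k<N. t k) \<le> suminf t" using tsum tnn by (intro sum_le_suminf) auto
      moreover have "0 \<le> (\<Sum>k<N. t k)" using tnn by (intro sum_nonneg) auto
      ultimately show ?thesis by simp
    qed
    thus ?thesis unfolding bounded_iff by blast
  qed
  note mc = monotone_convergence_increasing[of f "{0<..<1}" g, OF fi mono conv bnd]
  have "(\<lambda>N. integral {0<..<1} (f N)) = (\<lambda>N. \<Sum>k<N. t k)"
    using fint by (intro ext integral_unique)
  with mc have tg: "t sums integral {0<..<1} g" unfolding sums_def by simp
  define val where "val = ln (2 * pi) / real m - 1 / (real m)\<^sup>2 - (Fm m - Am m)"
  have h1: "((\<lambda>y. ln (2 * pi) * y ^ (m - 1)) has_integral (ln (2 * pi) * (1 / (real (m - 1) + 1)))) {0..1}"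
    by (intro has_integral_mult_right power_integral01)
  have h: "((\<lambda>y. ln (2 * pi) * y ^ (m - 1) + y ^ (m - 1) * ln y - y ^ (m - 1) * ln (2 * sin (pi * y))) has_integral
       (ln (2 * pi) * (1 / (real (m - 1) + 1)) + (- 1 / (real m)\<^sup>2) - (Fm m - Am m))) {0..1}"
    by (intro has_integral_diff has_integral_add h1 ylny_integral V_formula m)
  have vv: "ln (2 * pi) * (1 / (real (m - 1) + 1)) + (- 1 / (real m)\<^sup>2) - (Fm m - Am m) = val"
    unfolding val_def using m by (simp add: of_nat_diff)
  have "(g has_integral val) {0<..<1}"
  proof -
    have "((\<lambda>y. ln (2 * pi) * y ^ (m - 1) + y ^ (m - 1) * ln y - y ^ (m - 1) * ln (2 * sin (pi * y))) has_integral val) {0<..<1}"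
      using h unfolding vv by (simp add: has_integral_Icc_iff_Ioo)
    moreover have cong: "ln (2 * pi) * y ^ (m - 1) + y ^ (m - 1) * ln y - y ^ (m - 1) * ln (2 * sin (pi * y)) = g y"
      if "y \<in> {0<..<1}" for y
    proof -
      have y: "0 < y" "y < 1" using that by auto
      have sp: "0 < sin (pi * y)" using y by (intro sin_gt_zero) auto
      have eqn: "ln (pi * y / sin (pi * y)) = ln (2 * pi) + ln y - ln (2 * sin (pi * y))"
        using y sp by (simp add: ln_div ln_mult)
      show ?thesis unfolding g_def eqn by (simp add: algebra_simps)
    qed
    moreover have "((\<lambda>y. ln (2 * pi) * y ^ (m - 1) + y ^ (m - 1) * ln y - y ^ (m - 1) * ln (2 * sin (pi * y))) has_integral val) {0<..<1}
        = (g has_integral val) {0<..<1}"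
      by (rule has_integral_cong) (rule cong)
    ultimately show ?thesis by simp
  qed
  hence iv: "integral {0<..<1} g = val" by (rule integral_unique)
  from tg have "t sums val" by (simp only: iv)
  thus ?thesis unfolding t_def[abs_def] z_def val_def .
qed

lemma i_pow_even: "even m \<Longrightarrow> \<i> ^ m = complex_of_real ((-1) ^ (m div 2))"
proof -
  assume "even m"
  then obtain k where k: "m = 2 * k" by blast
  have "\<i> ^ m = (\<i> ^ 2) ^ k" unfolding k by (simp add: power_mult)
  also have "\<dots> = (-1) ^ k" by simp
  finally show ?thesis using k by simp
qed

lemma middle_term:
  fixes m n :: nat
  assumes "m \<noteq> n" and par: "even m \<longleftrightarrow> even n"
  shows "(1 + (-1)^n) / (2 * (of_int (int m - int n)))
            * (\<i>^m * of_nat (fact (m - 1)) * complex_of_real (rzeta (real m + 1) / (2 * pi)^m)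
               - \<i>^n * of_nat (fact (n - 1)) * complex_of_real (rzeta (real n + 1) / (2 * pi)^n))
         = complex_of_real ((Am m - Am n) / real_of_int (int m - int n))"
proof (cases "even n")
  case True
  hence em: "even m" using par by simp
  have a: "\<i>^m * of_nat (fact (m - 1)) * complex_of_real (rzeta (real m + 1) / (2 * pi)^m) = complex_of_real (Am m)"
    unfolding Am_def using em by (simp add: i_pow_even)
  have b: "\<i>^n * of_nat (fact (n - 1)) * complex_of_real (rzeta (real n + 1) / (2 * pi)^n) = complex_of_real (Am n)"
    unfolding Am_def using True by (simp add: i_pow_even)
  have c: "(1 + (-1)^n :: complex) = 2" using True by simp
  have d: "(of_int (int m - int n) :: complex) = complex_of_real (real_of_int (int m - int n))" by simp
  have nz: "complex_of_nat m - complex_of_nat n \<noteq> 0" using assms(1) by simp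
  show ?thesis unfolding a b c d using nz by (simp add: field_simps)
next
  case False
  hence em: "odd m" using par by simp
  have c: "(1 + (-1)^n :: complex) = 0" using False by simp
  show ?thesis unfolding c using False em by (simp add: Am_def)
qed

lemma frac_id:
  fixes z K a b D :: real
  assumes "K \<noteq> 0" "a \<noteq> 0" "b \<noteq> 0" "D \<noteq> 0" "a - b = D"
  shows "(z / (K * b) - z / (K * a)) / D = z / (K * a * b)"
proof -
  have "z / (K * b) - z / (K * a) = z * (a - b) / (K * a * b)"
    using assms(1-3) by (simp add: field_simps)
  also have "\<dots> = z * D / (K * a * b)" using assms(5) by simp
  finally show ?thesis using assms(4) by simp
qed

lemma val_id:
  fixes a b L Fa Fb Aa Ab :: real
  assumes a: "a \<noteq> 0" and b: "b \<noteq> 0" and ab: "a - b \<noteq> 0"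
  shows "((L / b - 1 / b\<^sup>2 - (Fb - Ab)) - (L / a - 1 / a\<^sup>2 - (Fa - Aa))) / (a - b)
         = - (a + b) / (a * b)\<^sup>2 + L / (a * b) - (Aa - Ab) / (a - b) + 1 / (a - b) * (Fa - Fb)"
proof -
  have e1: "(L / b - L / a) / (a - b) = L / (a * b)"
  proof -
    have "L / b - L / a = L * (a - b) / (a * b)" using a b by (simp add: field_simps)
    thus ?thesis using ab by simp
  qed
  have e2: "(1 / a\<^sup>2 - 1 / b\<^sup>2) / (a - b) = - (a + b) / (a * b)\<^sup>2"
  proof -
    have "1 / a\<^sup>2 - 1 / b\<^sup>2 = - (a + b) * (a - b) / (a * b)\<^sup>2"
      using a b by (simp add: field_simps power2_eq_square)
    thus ?thesis using ab by simp
  qed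
  have "((L / b - 1 / b\<^sup>2 - (Fb - Ab)) - (L / a - 1 / a\<^sup>2 - (Fa - Aa))) / (a - b)
      = (L / b - L / a) / (a - b) + (1 / a\<^sup>2 - 1 / b\<^sup>2) / (a - b) - (Aa - Ab) / (a - b) + 1 / (a - b) * (Fa - Fb)"
    by (simp add: diff_divide_distrib add_divide_distrib)
  also have "\<dots> = - (a + b) / (a * b)\<^sup>2 + L / (a * b) - (Aa - Ab) / (a - b) + 1 / (a - b) * (Fa - Fb)"
    unfolding e1 e2 by simp
  finally show ?thesis .
qed

theorem corollary21:
  fixes m n :: nat
  assumes "m > 0" and "n > 0" and "m \<noteq> n" and "even m \<longleftrightarrow> even n"
  shows "(\<lambda>k. complex_of_real (rzeta (2 * real (Suc k)) / (real (Suc k) * (2 * real (Suc k) + real m) * (2 * real (Suc k) + real n))))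
           sums
         (complex_of_real (- (real m + real n) / (real m * real n)^2 + ln (2 * pi) / (real m * real n))
          - (1 + (-1)^n) / (2 * (of_int (int m - int n)))
            * (\<i>^m * of_nat (fact (m - 1)) * complex_of_real (rzeta (real m + 1) / (2 * pi)^m)
               - \<i>^n * of_nat (fact (n - 1)) * complex_of_real (rzeta (real n + 1) / (2 * pi)^n))
          + complex_of_real (1 / real_of_int (int m - int n)
            * (fact (m - 1) * (\<Sum>j=1..m div 2. (-1)^j * rzeta (2 * real j + 1) / (fact (m - 2 * j) * (2 * pi)^(2 * j)))
               - fact (n - 1) * (\<Sum>j=1..n div 2. (-1)^j * rzeta (2 * real j + 1) / (fact (n - 2 * j) * (2 * pi)^(2 * j))))))"
proof -
  define Tv where "Tv q = ln (2 * pi) / real q - 1 / (real q)\<^sup>2 - (Fm q - Am q)" for q :: nat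
  define D where "D = real_of_int (int m - int n)"
  have D: "D = real m - real n" "D \<noteq> 0" using assms(3) by (auto simp: D_def)
  have Tm: "(\<lambda>k. rzeta (2 * real (Suc k)) / (real (Suc k) * (2 * real (Suc k) + real m))) sums Tv m"
    unfolding Tv_def using assms(1) by (intro T_sums) auto
  have Tn: "(\<lambda>k. rzeta (2 * real (Suc k)) / (real (Suc k) * (2 * real (Suc k) + real n))) sums Tv n"
    unfolding Tv_def using assms(2) by (intro T_sums) auto
  have S: "(\<lambda>k. (rzeta (2 * real (Suc k)) / (real (Suc k) * (2 * real (Suc k) + real n))
                 - rzeta (2 * real (Suc k)) / (real (Suc k) * (2 * real (Suc k) + real m))) / D)
           sums ((Tv n - Tv m) / D)"
    by (intro sums_divide sums_diff Tn Tm)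
  have trm: "(rzeta (2 * real (Suc k)) / (real (Suc k) * (2 * real (Suc k) + real n))
                 - rzeta (2 * real (Suc k)) / (real (Suc k) * (2 * real (Suc k) + real m))) / D
      = rzeta (2 * real (Suc k)) / (real (Suc k) * (2 * real (Suc k) + real m) * (2 * real (Suc k) + real n))" for k
  proof -
    have p0: "0 < real (Suc k)" by (simp only: of_nat_0_less_iff zero_less_Suc)
    have q1: "0 < 2 * real (Suc k) + real m"
      using p0 by (intro add_pos_nonneg mult_pos_pos) auto
    have q2: "0 < 2 * real (Suc k) + real n"
      using p0 by (intro add_pos_nonneg mult_pos_pos) auto
    note q = q1 q2
    have p1: "real (Suc k) \<noteq> 0" "2 * real (Suc k) + real m \<noteq> 0" "2 * real (Suc k) + real n \<noteq> 0"
      using p0 q by auto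
    show ?thesis using p1 D by (intro frac_id) auto
  qed
  have S': "(\<lambda>k. rzeta (2 * real (Suc k)) / (real (Suc k) * (2 * real (Suc k) + real m) * (2 * real (Suc k) + real n)))
           sums ((Tv n - Tv m) / D)"
    using S unfolding trm .
  have val: "(Tv n - Tv m) / D = - (real m + real n) / (real m * real n)^2 + ln (2 * pi) / (real m * real n)
        - (Am m - Am n) / D + 1 / D * (Fm m - Fm n)"
  proof -
    have m0: "real m \<noteq> 0" and n0: "real n \<noteq> 0" using assms by auto
    have "D = real m - real n" by (rule D(1))
    thus ?thesis unfolding Tv_def using val_id[OF m0 n0, of "ln (2 * pi)" "Fm n" "Am n" "Fm m" "Am m"] D(2) by simp
  qed
  have C: "(\<lambda>k. complex_of_real (rzeta (2 * real (Suc k)) / (real (Suc k) * (2 * real (Suc k) + real m) * (2 * real (Suc k) + real n))))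
           sums complex_of_real ((Tv n - Tv m) / D)"
    using S' by (rule sums_of_real)
  note mt = middle_term[OF assms(3,4)]
  have Fm': "fact (m - 1) * (\<Sum>j=1..m div 2. (-1)^j * rzeta (2 * real j + 1) / (fact (m - 2 * j) * (2 * pi)^(2 * j))) = Fm m"
    by (simp add: Fm_def)
  have Fn': "fact (n - 1) * (\<Sum>j=1..n div 2. (-1)^j * rzeta (2 * real j + 1) / (fact (n - 2 * j) * (2 * pi)^(2 * j))) = Fm n"
    by (simp add: Fm_def)
  show ?thesis unfolding mt Fm' Fn' D_def[symmetric]
    by (simp only: of_real_add[symmetric] of_real_diff[symmetric] val[symmetric] C)
qed

end
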